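(* Let $X$ be an exponential vector space over a field $K$, let $B$ be a basis of $X\smallsetminus X_0$ and let $x\in B$. Then for every $y\in X\smallsetminus X_0$ with $y\leq x$, the set $(B\smallsetminus\{x\})\cup\{y\}$ is also a basis of $X\smallsetminus X_0$.
   Context: An exponential vector space (evs) over a field $K$ is a partially ordered set $(X,\leq)$ with a binary operation $+$ on $X$ and a map $K\times X\to X$, $(\alpha,x)\mapsto \alpha x$, such that: (A1) $(X,+)$ is a commutative semigroup with identity $\theta$; (A2) $x\leq y$ implies $x+z\leq y+z$ and $\alpha x\leq \alpha y$ for all $z\in X$, $\alpha\in K$; (A3) $\alpha(x+y)=\alpha x+\alpha y$, $\alpha(\beta x)=(\alpha\beta)x$, $(\alpha+\beta)x\leq \alpha x+\beta x$, $1x=x$; (A4) $\alpha x=\theta$ iff $\alpha=0$ or $x=\theta$; (A5) $x+(-1)x=\theta$ iff $x\in X_0$, where $X_0:=\{z\in X: y\not\leq z \text{ for all } y\in X\smallsetminus\{z\}\}$ (the set of minimal elements, called the primitive space; it is a vector space over $K$); (A6) for each $x\in X$ there is $p\in X_0$ with $p\leq x$. For $x\in X\smallsetminus X_0$ let $L(x):=\{z\in X: z\geq \alpha x+p \text{ for some } \alpha\in K\smallsetminus\{0\},\ p\in X_0\}$. A subset $B\subseteq X\smallsetminus X_0$ generates $X\smallsetminus X_0$ if $X\smallsetminus X_0=\bigcup_{b\in B}L(b)$. Elements $x,y\in X\smallsetminus X_0$ are orderly dependent if $x\in L(y)$ or $y\in L(x)$, and orderly independent otherwise; $B\subseteq X\smallsetminus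 X_0$ is orderly independent if any two distinct members of $B$ are orderly independent. A basis of $X\smallsetminus X_0$ is an orderly independent subset of $X\smallsetminus X_0$ that generates $X\smallsetminus X_0$. *)

theory Defs
  imports Main
begin

text \<open>An exponential vector space over a field 'k. The underlying set X is the
whole type 'x; le is the partial order, add the addition with identity theta,
smul the scalar multiplication.\<close>

definition primitive :: "('x \<Rightarrow> 'x \<Rightarrow> bool) \<Rightarrow> 'x set" where
  "primitive le = {z. \<forall>y. y \<noteq> z \<longrightarrow> \<not> le y z}"

definition evs :: "('x \<Rightarrow> 'x \<Rightarrow> bool) \<Rightarrow> ('x \<Rightarrow> 'x \<Rightarrow> 'x) \<Rightarrow> 'x
    \<Rightarrow> ('k::field \<Rightarrow> 'x \<Rightarrow> 'x) \<Rightarrow> bool" where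
  "evs le add theta smul \<longleftrightarrow>
     \<comment> \<open>partial order\<close>
     (\<forall>x. le x x) \<and> (\<forall>x y. le x y \<and> le y x \<longrightarrow> x = y) \<and>
     (\<forall>x y z. le x y \<and> le y z \<longrightarrow> le x z) \<and>
     \<comment> \<open>A1\<close>
     (\<forall>x y z. add (add x y) z = add x (add y z)) \<and>
     (\<forall>x y. add x y = add y x) \<and> (\<forall>x. add x theta = x) \<and>
     \<comment> \<open>A2\<close>
     (\<forall>x y z. le x y \<longrightarrow> le (add x z) (add y z)) \<and>
     (\<forall>x y a. le x y \<longrightarrow> le (smul a x) (smul a y)) \<and>
     \<comment> \<open>A3\<close>
     (\<forall>a x y. smul a (add x y) = add (smul a x) (smul a y)) \<and>
     (\<forall>a b x. smul a (smul b x) = smul (a * b) x) \<and>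
     (\<forall>a b x. le (smul (a + b) x) (add (smul a x) (smul b x))) \<and>
     (\<forall>x. smul 1 x = x) \<and>
     \<comment> \<open>A4\<close>
     (\<forall>a x. smul a x = theta \<longleftrightarrow> a = 0 \<or> x = theta) \<and>
     \<comment> \<open>A5\<close>
     (\<forall>x. add x (smul (-1) x) = theta \<longleftrightarrow> x \<in> primitive le) \<and>
     \<comment> \<open>A6\<close>
     (\<forall>x. \<exists>p \<in> primitive le. le p x)"

definition Lset :: "('x \<Rightarrow> 'x \<Rightarrow> bool) \<Rightarrow> ('x \<Rightarrow> 'x \<Rightarrow> 'x)
    \<Rightarrow> ('k::field \<Rightarrow> 'x \<Rightarrow> 'x) \<Rightarrow> 'x \<Rightarrow> 'x set" where
  "Lset le add smul x =
     {z. \<exists>a p. a \<noteq> 0 \<and> p \<in> primitive le \<and> le (add (smul a x) p) z}"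

definition generates :: "('x \<Rightarrow> 'x \<Rightarrow> bool) \<Rightarrow> ('x \<Rightarrow> 'x \<Rightarrow> 'x)
    \<Rightarrow> ('k::field \<Rightarrow> 'x \<Rightarrow> 'x) \<Rightarrow> 'x set \<Rightarrow> bool" where
  "generates le add smul B \<longleftrightarrow>
     B \<subseteq> - primitive le \<and> - primitive le = (\<Union>b\<in>B. Lset le add smul b)"

definition orderly_independent_pair :: "('x \<Rightarrow> 'x \<Rightarrow> bool) \<Rightarrow> ('x \<Rightarrow> 'x \<Rightarrow> 'x)
    \<Rightarrow> ('k::field \<Rightarrow> 'x \<Rightarrow> 'x) \<Rightarrow> 'x \<Rightarrow> 'x \<Rightarrow> bool" where
  "orderly_independent_pair le add smul x y \<longleftrightarrow>
     \<not> (x \<in> Lset le add smul y \<or> y \<in> Lset le add smul x)"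

definition orderly_independent :: "('x \<Rightarrow> 'x \<Rightarrow> bool) \<Rightarrow> ('x \<Rightarrow> 'x \<Rightarrow> 'x)
    \<Rightarrow> ('k::field \<Rightarrow> 'x \<Rightarrow> 'x) \<Rightarrow> 'x set \<Rightarrow> bool" where
  "orderly_independent le add smul B \<longleftrightarrow>
     B \<subseteq> - primitive le \<and>
     (\<forall>x\<in>B. \<forall>y\<in>B. x \<noteq> y \<longrightarrow> orderly_independent_pair le add smul x y)"

definition evs_basis :: "('x \<Rightarrow> 'x \<Rightarrow> bool) \<Rightarrow> ('x \<Rightarrow> 'x \<Rightarrow> 'x)
    \<Rightarrow> ('k::field \<Rightarrow> 'x \<Rightarrow> 'x) \<Rightarrow> 'x set \<Rightarrow> bool" where
  "evs_basis le add smul B \<longleftrightarrow>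
     orderly_independent le add smul B \<and> generates le add smul B"

end

theory Submission
  imports Defs
begin

lemma prim_smul:
  assumes E: "evs le add theta (smul::'k::field \<Rightarrow> _)" and q: "q \<in> primitive le"
  shows "smul (a::'k::field) q \<in> primitive le"
proof -
  have A5: "\<And>x. add x (smul (-1) x) = theta \<longleftrightarrow> x \<in> primitive le" using E unfolding evs_def by (elim conjE) (erule allE)+
  have sm: "\<And>a b x. smul a (smul b x) = smul (a * b) x" using E unfolding evs_def by (elim conjE) (erule allE)+
  have di: "\<And>a x y. smul a (add x y) = add (smul a x) (smul a y)" using E unfolding evs_def by (elim conjE) (erule allE)+
  have A4: "\<And>a x. smul a x = theta \<longleftrightarrow> a = 0 \<or> x = theta" using E unfolding evs_def by (elim conjE) (erule allE)+
  have "smul (-1) (smul a q) = smul a (smul (-1) q)" using sm by (simp add: mult.commute)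
  hence "add (smul a q) (smul (-1) (smul a q)) = smul a (add q (smul (-1) q))" using di by simp
  also have "\<dots> = theta" using A5 q A4 by simp
  finally show ?thesis using A5 by blast
qed

lemma prim_add:
  assumes E: "evs le add theta (smul::'k::field \<Rightarrow> _)" and p: "p \<in> primitive le" and q: "q \<in> primitive le"
  shows "add p q \<in> primitive le"
proof -
  have A5: "\<And>x. add x (smul (-1::'k) x) = theta \<longleftrightarrow> x \<in> primitive le" using E unfolding evs_def by (elim conjE) (erule allE)+
  have di: "\<And>a x y. smul (a::'k) (add x y) = add (smul a x) (smul a y)" using E unfolding evs_def by (elim conjE) (erule allE)+
  have as: "\<And>x y z. add (add x y) z = add x (add y z)" using E unfolding evs_def by (elim conjE) (erule allE)+
  have co: "\<And>x y. add x y = add y x" using E unfolding evs_def by (elim conjE) (erule allE)+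
  have th: "\<And>x. add x theta = x" using E unfolding evs_def by (elim conjE) (erule allE)+
  have "add (add p q) (smul (-1::'k) (add p q)) = add (add p (smul (-1::'k) p)) (add q (smul (-1::'k) q))"
    using di as co by metis
  also have "\<dots> = theta" using A5[of p] A5[of q] p q th by simp
  finally show ?thesis using A5 by blast
qed

lemma theta_prim:
  assumes E: "evs le add theta (smul::'k::field \<Rightarrow> _)"
  shows "theta \<in> primitive le"
proof -
  have A5: "\<And>x. add x (smul (-1::'k) x) = theta \<longleftrightarrow> x \<in> primitive le" using E unfolding evs_def by (elim conjE) (erule allE)+
  have A4: "\<And>a x. smul (a::'k) x = theta \<longleftrightarrow> a = 0 \<or> x = theta" using E unfolding evs_def by (elim conjE) (erule allE)+
  have th: "\<And>x. add x theta = x" using E unfolding evs_def by (elim conjE) (erule allE)+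
  have "smul (-1::'k) theta = theta" using A4 by blast
  thus ?thesis using A5[of theta] th by simp
qed

lemma L_self:
  assumes E: "evs le add theta (smul::'k::field \<Rightarrow> _)" and "le w z"
  shows "z \<in> Lset le add smul w"
proof -
  have th: "\<And>x. add x theta = x" using E unfolding evs_def by (elim conjE) (erule allE)+
  have one: "\<And>x. smul 1 x = x" using E unfolding evs_def by (elim conjE) (erule allE)+
  show ?thesis unfolding Lset_def using theta_prim[OF E] th one assms(2)
    by (intro CollectI exI[of _ "1::'k"] exI[of _ theta]) simp
qed

lemma L_trans:
  assumes E: "evs le add theta (smul::'k::field \<Rightarrow> _)"
    and z: "z \<in> Lset le add smul w" and w: "w \<in> Lset le add smul v"
  shows "z \<in> Lset le add smul v"
proof -
  have sm: "\<And>a b x. smul a (smul b x) = smul (a * b) x" using E unfolding evs_def by (elim conjE) (erule allE)+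
  have di: "\<And>a x y. smul a (add x y) = add (smul a x) (smul a y)" using E unfolding evs_def by (elim conjE) (erule allE)+
  have as: "\<And>x y z. add (add x y) z = add x (add y z)" using E unfolding evs_def by (elim conjE) (erule allE)+
  have tr: "\<And>x y z. le x y \<and> le y z \<longrightarrow> le x z" using E unfolding evs_def by (elim conjE) (erule allE)+
  have m1: "\<And>x y z. le x y \<longrightarrow> le (add x z) (add y z)" using E unfolding evs_def by (elim conjE) (erule allE)+
  have m2: "\<And>x y a. le x y \<longrightarrow> le (smul a x) (smul a y)" using E unfolding evs_def by (elim conjE) (erule allE)+
  obtain a p where a: "a \<noteq> 0" "p \<in> primitive le" "le (add (smul a w) p) z" using z unfolding Lset_def by blast
  obtain b q where b: "b \<noteq> 0" "q \<in> primitive le" "le (add (smul b v) q) w" using w unfolding Lset_def by blast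
  have "le (smul a (add (smul b v) q)) (smul a w)" using m2 b(3) by blast
  hence "le (add (smul (a*b) v) (smul a q)) (smul a w)" using di sm by simp
  hence "le (add (add (smul (a*b) v) (smul a q)) p) (add (smul a w) p)" using m1 by blast
  hence "le (add (smul (a*b) v) (add (smul a q) p)) z" using as tr a(3) by metis
  moreover have "add (smul a q) p \<in> primitive le" using prim_add[OF E prim_smul[OF E b(2)] a(2)] .
  moreover have "a*b \<noteq> 0" using a b by simp
  ultimately show ?thesis unfolding Lset_def by blast
qed

theorem mainTheorem4:
  fixes le :: "'x \<Rightarrow> 'x \<Rightarrow> bool" and add :: "'x \<Rightarrow> 'x \<Rightarrow> 'x" and theta :: 'x
    and smul :: "'k::field \<Rightarrow> 'x \<Rightarrow> 'x"
    and B :: "'x set" and x y :: 'x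
  assumes "evs le add theta smul"
    and "evs_basis le add smul B"
    and "x \<in> B"
    and "y \<notin> primitive le"
    and "le y x"
  shows "evs_basis le add smul ((B - {x}) \<union> {y})"
proof -
  note E = assms(1)
  have tr: "\<And>x y z. le x y \<and> le y z \<longrightarrow> le x z" using E unfolding evs_def by (elim conjE) (erule allE)+
  have gen: "- primitive le = (\<Union>b\<in>B. Lset le add smul b)" and Bsub: "B \<subseteq> - primitive le"
    using assms(2) unfolding evs_basis_def generates_def by auto
  have ind: "\<And>u v. u \<in> B \<Longrightarrow> v \<in> B \<Longrightarrow> u \<noteq> v \<Longrightarrow> u \<notin> Lset le add smul v"
    using assms(2) unfolding evs_basis_def orderly_independent_def orderly_independent_pair_def by blast
  obtain b where b: "b \<in> B" "y \<in> Lset le add smul b" using gen assms(4) by blast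
  have "x \<in> Lset le add smul b" using b(2) assms(5) tr unfolding Lset_def by blast
  hence "b = x" using ind[OF assms(3) b(1)] by blast
  with b have yx: "y \<in> Lset le add smul x" by simp
  have xy: "x \<in> Lset le add smul y" using L_self[OF E assms(5)] .
  have LL: "Lset le add smul y = Lset le add smul x"
    using L_trans[OF E _ yx] L_trans[OF E _ xy] by blast
  have gen': "generates le add smul ((B - {x}) \<union> {y})"
    unfolding generates_def using gen Bsub assms(3,4) LL by auto
  have ind': "orderly_independent le add smul ((B - {x}) \<union> {y})"
    unfolding orderly_independent_def orderly_independent_pair_def
  proof (intro conjI ballI impI)
    show "B - {x} \<union> {y} \<subseteq> - primitive le" using Bsub assms(4) by auto
  next
    fix u v assume u: "u \<in> B - {x} \<union> {y}" and v: "v \<in> B - {x} \<union> {y}" and uv: "u \<noteq> v"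
    have c1: "c \<notin> Lset le add smul y" "y \<notin> Lset le add smul c" if c: "c \<in> B" "c \<noteq> x" for c
    proof -
      show "c \<notin> Lset le add smul y" using LL ind[OF c(1) assms(3) c(2)] by simp
      show "y \<notin> Lset le add smul c"
        using L_trans[OF E xy] ind[OF assms(3) c(1)] c(2) by metis
    qed
    show "\<not> (u \<in> Lset le add smul v \<or> v \<in> Lset le add smul u)"
      using u v uv c1 ind by blast
  qed
  show ?thesis unfolding evs_basis_def using gen' ind' by blast
qed

end
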